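(* Let $\phi\colon\mathbb{R}\to\mathbb{R}$ be an increasing homeomorphism with $\phi(0)=0$, let $f\colon\mathbb{R}\to\mathbb{R}$ be continuous, and let $h\colon[0,T]\times\mathbb{R}\to\mathbb{R}$ be a Carathéodory function satisfying: $(A_0)$ for all $t_0\in[0,T]$, $u_0\in\mathbb{R}$ and $\varepsilon>0$ there exists $\delta>0$ such that if $|t-t_0|<\delta$ and $|u-u_0|<\delta$ then $|h(t,u)-h(t,u_0)|<\varepsilon$ for a.e. $t$. Let $a>0$ and $\alpha\in\mathfrak{D}$ be such that $$(\phi(\alpha'(t)))'+f(\alpha(t))\alpha'(t)+h(t,\alpha(t))\ge a\quad\text{for a.e. }t\in[0,T].$$ Then $\alpha$ is a strict lower solution to $(\phi(u'))'+f(u)u'+h(t,u)=0$.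
   Context: $\mathcal{C}^1_T=\{u\in\mathcal{C}^1([0,T]):u(0)=u(T),\,u'(0)=u'(T)\}$ and $\mathfrak{D}=\{u\in\mathcal{C}^1_T:\phi(u')\text{ is absolutely continuous}\}$. A $T$-periodic solution of $(\phi(u'))'+f(u)u'+h(t,u)=0$ is a $u\in\mathfrak{D}$ satisfying the equation a.e. A function $\alpha\in\mathfrak{D}$ is a strict lower solution of this equation if $(\phi(\alpha'))'+f(\alpha)\alpha'+h(t,\alpha)>0$ for a.e. $t\in[0,T]$ and, whenever $u$ is a $T$-periodic solution with $u(t)\ge\alpha(t)$ for all $t\in[0,T]$, then $u(t)>\alpha(t)$ for all $t\in[0,T]$. A Carathéodory function is measurable in $t$, continuous in $u$, and for each $r>0$ bounded in absolute value on $[0,T]\times[-r,r]$ by an $L^1$ function of $t$. *)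

theory Defs
  imports "HOL-Analysis.Analysis"
begin

definition abs_continuous_on :: "real set \<Rightarrow> (real \<Rightarrow> real) \<Rightarrow> bool" where
  "abs_continuous_on S g \<longleftrightarrow>
     (\<forall>e>0. \<exists>d>0. \<forall>(n::nat) (a::nat \<Rightarrow> real) (b::nat \<Rightarrow> real).
        (\<forall>i<n. a i \<le> b i \<and> a i \<in> S \<and> b i \<in> S) \<and>
        (\<forall>i<n. \<forall>j<n. i \<noteq> j \<longrightarrow> b i \<le> a j \<or> b j \<le> a i) \<and>
        (\<Sum>i<n. b i - a i) < d
        \<longrightarrow> (\<Sum>i<n. \<bar>g (b i) - g (a i)\<bar>) < e)"

definition C1_T :: "real \<Rightarrow> (real \<Rightarrow> real) \<Rightarrow> (real \<Rightarrow> real) \<Rightarrow> bool" where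
  "C1_T T u u' \<longleftrightarrow>
     (\<forall>t\<in>{0..T}. (u has_real_derivative u' t) (at t within {0..T})) \<and>
     continuous_on {0..T} u' \<and> u 0 = u T \<and> u' 0 = u' T"

definition in_D :: "real \<Rightarrow> (real \<Rightarrow> real) \<Rightarrow> (real \<Rightarrow> real) \<Rightarrow> (real \<Rightarrow> real) \<Rightarrow> bool" where
  "in_D T \<phi> u u' \<longleftrightarrow> C1_T T u u' \<and> abs_continuous_on {0..T} (\<lambda>t. \<phi> (u' t))"

definition op_rel :: "real \<Rightarrow> (real \<Rightarrow> real) \<Rightarrow> (real \<Rightarrow> real) \<Rightarrow> (real \<Rightarrow> real \<Rightarrow> real)
    \<Rightarrow> (real \<Rightarrow> real) \<Rightarrow> (real \<Rightarrow> real) \<Rightarrow> (real \<Rightarrow> bool) \<Rightarrow> real \<Rightarrow> bool" where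
  "op_rel T \<phi> f h u u' R t \<longleftrightarrow>
     (\<exists>d. ((\<lambda>s. \<phi> (u' s)) has_real_derivative d) (at t within {0..T}) \<and>
          R (d + f (u t) * u' t + h t (u t)))"

definition periodic_solution ::
    "real \<Rightarrow> (real \<Rightarrow> real) \<Rightarrow> (real \<Rightarrow> real) \<Rightarrow> (real \<Rightarrow> real \<Rightarrow> real) \<Rightarrow> (real \<Rightarrow> real) \<Rightarrow> bool" where
  "periodic_solution T \<phi> f h u \<longleftrightarrow>
     (\<exists>u'. in_D T \<phi> u u' \<and>
        (AE t in lebesgue. t \<in> {0..T} \<longrightarrow> op_rel T \<phi> f h u u' (\<lambda>x. x = 0) t))"

definition strict_lower_solution ::
    "real \<Rightarrow> (real \<Rightarrow> real) \<Rightarrow> (real \<Rightarrow> real) \<Rightarrow> (real \<Rightarrow> real \<Rightarrow> real) \<Rightarrow> (real \<Rightarrow> real) \<Rightarrow> bool" where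
  "strict_lower_solution T \<phi> f h \<alpha> \<longleftrightarrow>
     (\<exists>\<alpha>'. in_D T \<phi> \<alpha> \<alpha>' \<and>
        (AE t in lebesgue. t \<in> {0..T} \<longrightarrow> op_rel T \<phi> f h \<alpha> \<alpha>' (\<lambda>x. x > 0) t)) \<and>
     (\<forall>u. periodic_solution T \<phi> f h u \<and> (\<forall>t\<in>{0..T}. u t \<ge> \<alpha> t)
          \<longrightarrow> (\<forall>t\<in>{0..T}. u t > \<alpha> t))"

definition caratheodory :: "real \<Rightarrow> (real \<Rightarrow> real \<Rightarrow> real) \<Rightarrow> bool" where
  "caratheodory T h \<longleftrightarrow>
     (\<forall>u. (\<lambda>t. h t u) \<in> borel_measurable (lebesgue_on {0..T})) \<and>
     (\<forall>t\<in>{0..T}. continuous_on UNIV (h t)) \<and>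
     (\<forall>r>0. \<exists>g. g integrable_on {0..T} \<and>
        (AE t in lebesgue. t \<in> {0..T} \<longrightarrow> (\<forall>u. \<bar>u\<bar> \<le> r \<longrightarrow> \<bar>h t u\<bar> \<le> g t)))"

definition cond_A0 :: "real \<Rightarrow> (real \<Rightarrow> real \<Rightarrow> real) \<Rightarrow> bool" where
  "cond_A0 T h \<longleftrightarrow>
     (\<forall>t0\<in>{0..T}. \<forall>u0 e. e > 0 \<longrightarrow> (\<exists>d>0.
        AE t in lebesgue. (t \<in> {0..T} \<and> \<bar>t - t0\<bar> < d) \<longrightarrow>
          (\<forall>u. \<bar>u - u0\<bar> < d \<longrightarrow> \<bar>h t u - h t u0\<bar> < e)))"

end

theory Submission
  imports Defs
begin


lemma nonoverlap_real:
  fixes a1 b1 a2 b2 :: real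
  assumes "a1 < b1" "a2 < b2" "interior {a1..b1} \<inter> interior {a2..b2} = {}"
  shows "b1 \<le> a2 \<or> b2 \<le> a1"
proof (rule ccontr)
  assume "\<not> ?thesis"
  then have "max a1 a2 < min b1 b2" using assms by auto
  then have "(max a1 a2 + min b1 b2)/2 \<in> interior {a1..b1} \<inter> interior {a2..b2}"
    using assms by (auto simp: interior_atLeastAtMost_real)
  with assms show False by auto
qed

lemma ac_nonincr:
  fixes g :: "real \<Rightarrow> real"
  assumes xy: "x \<le> y" and sub: "{x..y} \<subseteq> S" and ac: "abs_continuous_on S g"
    and N: "negligible N"
    and der: "\<And>t. t \<in> {x..y} \<Longrightarrow> t \<notin> N \<Longrightarrow> \<exists>D. (g has_real_derivative D) (at t within S) \<and> D \<le> 0"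
  shows "g y \<le> g x"
proof -
  have key: "g y - g x \<le> e * (y - x) + e" if e: "e > 0" for e
  proof -
    obtain \<delta> where \<delta>: "\<delta> > 0" and H: "\<forall>(n::nat) (a::nat \<Rightarrow> real) (b::nat \<Rightarrow> real).
        (\<forall>i<n. a i \<le> b i \<and> a i \<in> S \<and> b i \<in> S) \<and>
        (\<forall>i<n. \<forall>j<n. i \<noteq> j \<longrightarrow> b i \<le> a j \<or> b j \<le> a i) \<and>
        (\<Sum>i<n. b i - a i) < \<delta>
        \<longrightarrow> (\<Sum>i<n. \<bar>g (b i) - g (a i)\<bar>) < e"
      using ac e unfolding abs_continuous_on_def by blast
    have ac\<delta>: "\<And>(n::nat) a b. (\<forall>i<n. a i \<le> b i \<and> a i \<in> S \<and> b i \<in> S) \<Longrightarrow>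
        (\<forall>i<n. \<forall>j<n. i \<noteq> j \<longrightarrow> b i \<le> a j \<or> b j \<le> a i) \<Longrightarrow> (\<Sum>i<n. b i - a i) < \<delta>
        \<Longrightarrow> (\<Sum>i<n. \<bar>g (b i) - g (a i)\<bar>) < e"
      using H by blast
    have hi: "(indicator N has_integral (0::real)) {x..y}"
      by (rule has_integral_negligible[OF N]) (auto simp add: indicator_def)
    have "\<exists>\<gamma>. gauge \<gamma> \<and> (\<forall>\<D>. \<D> tagged_division_of {x..y} \<and> \<gamma> fine \<D> \<longrightarrow>
        norm (sum (\<lambda>(t,K). Henstock_Kurzweil_Integration.content K *\<^sub>R (indicator N t :: real)) \<D> - 0) < \<delta>)"
      by (rule has_integral_real[THEN iffD1, OF hi, rule_format, OF \<delta>])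
    then obtain \<gamma>1 where \<gamma>1: "gauge \<gamma>1" and \<gamma>1d: "\<And>\<D>. \<D> tagged_division_of {x..y} \<Longrightarrow> \<gamma>1 fine \<D> \<Longrightarrow>
        norm (sum (\<lambda>(t,K). Henstock_Kurzweil_Integration.content K *\<^sub>R (indicator N t :: real)) \<D> - 0) < \<delta>"
      by (elim exE conjE) (rule that, assumption, simp)
    have "\<forall>t. \<exists>r>0. t \<in> {x..y} \<and> t \<notin> N \<longrightarrow> (\<forall>s\<in>S. \<bar>s - t\<bar> < r \<longrightarrow>
            (t \<le> s \<longrightarrow> g s - g t \<le> e*(s-t)) \<and> (s \<le> t \<longrightarrow> g t - g s \<le> e*(t-s)))"
    proof
      fix t
      show "\<exists>r>0. t \<in> {x..y} \<and> t \<notin> N \<longrightarrow> (\<forall>s\<in>S. \<bar>s - t\<bar> < r \<longrightarrow>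
            (t \<le> s \<longrightarrow> g s - g t \<le> e*(s-t)) \<and> (s \<le> t \<longrightarrow> g t - g s \<le> e*(t-s)))"
      proof (cases "t \<in> {x..y} \<and> t \<notin> N")
        case False then show ?thesis by (intro exI[of _ 1]) auto
      next
        case True
        then obtain D where D: "(g has_real_derivative D) (at t within S)" "D \<le> 0" using der by blast
        then have "(g has_derivative (\<lambda>h. D * h)) (at t within S)"
          by (simp add: has_field_derivative_def)
        then obtain r where r: "r > 0" and rr: "\<forall>s\<in>S. norm (s - t) < r \<longrightarrow>
            norm (g s - g t - D * (s - t)) \<le> e * norm (s - t)"
          unfolding has_derivative_within_alt using e by meson
        have main: "\<forall>s\<in>S. \<bar>s - t\<bar> < r \<longrightarrow>
            (t \<le> s \<longrightarrow> g s - g t \<le> e*(s-t)) \<and> (s \<le> t \<longrightarrow> g t - g s \<le> e*(t-s))"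
        proof (intro ballI impI conjI)
          fix s assume s: "s \<in> S" "\<bar>s - t\<bar> < r"
          then have b: "\<bar>g s - g t - D * (s - t)\<bar> \<le> e * \<bar>s - t\<bar>" using rr by auto
          show "g s - g t \<le> e * (s - t)" if "t \<le> s"
          proof -
            have "D * (s - t) \<le> 0" using \<open>t \<le> s\<close> D(2) by (simp add: mult_nonpos_nonneg)
            then show "g s - g t \<le> e * (s - t)" using b that by auto
          qed
          show "g t - g s \<le> e * (t - s)" if "s \<le> t"
          proof -
            have "D * (t - s) \<le> 0" using \<open>s \<le> t\<close> D(2) by (simp add: mult_nonpos_nonneg)
            then show "g t - g s \<le> e * (t - s)" using b that by (auto simp: algebra_simps)
          qed
        qed
        show ?thesis using r main by blast
      qed
    qed
    from choice[OF this] obtain r where R: "\<forall>t. r t > 0 \<and> (t \<in> {x..y} \<and> t \<notin> N \<longrightarrow> (\<forall>s\<in>S. \<bar>s - t\<bar> < r t \<longrightarrow>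
            (t \<le> s \<longrightarrow> g s - g t \<le> e*(s-t)) \<and> (s \<le> t \<longrightarrow> g t - g s \<le> e*(t-s))))" by blast
    have r: "\<And>t. r t > 0" using R by blast
    have rP: "\<And>t s. t \<in> {x..y} \<Longrightarrow> t \<notin> N \<Longrightarrow> s\<in>S \<Longrightarrow>
         \<bar>s - t\<bar> < r t \<Longrightarrow> (t \<le> s \<longrightarrow> g s - g t \<le> e*(s-t)) \<and> (s \<le> t \<longrightarrow> g t - g s \<le> e*(t-s))"
      using R by blast
    define \<gamma> where "\<gamma> = (\<lambda>t. ball t (r t) \<inter> \<gamma>1 t)"
    have "gauge \<gamma>" unfolding \<gamma>_def by (intro gauge_Int gauge_ball_dependent \<gamma>1) (use r in auto)
    then obtain p where p: "p tagged_division_of {x..y}" "\<gamma> fine p"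
      using fine_division_exists[OF \<open>gauge \<gamma>\<close>, of x y] by (metis box_real(2))
    have fine1: "\<gamma>1 fine p" and fine2: "(\<lambda>t. ball t (r t)) fine p"
      using p(2) fine_Int[of "\<lambda>t. ball t (r t)" \<gamma>1 p] unfolding \<gamma>_def by auto
    have fin: "finite p" using p(1) by blast
    have elK: "K = {Inf K..Sup K} \<and> Inf K \<le> t \<and> t \<le> Sup K \<and> x \<le> Inf K \<and> Sup K \<le> y" if tK: "(t,K) \<in> p" for t K
    proof -
      obtain a b where K0: "K = cbox a b" using tagged_division_ofD(4)[OF p(1) tK] by blast
      then have K: "K = {a..b}" by (simp only: box_real)
      have "t \<in> K" using tagged_division_ofD(2)[OF p(1) tK] .
      moreover have "K \<subseteq> {x..y}" using tagged_division_ofD(3)[OF p(1) tK] .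
      ultimately have ab: "a \<le> t" "t \<le> b" "x \<le> a" "b \<le> y" using K by auto
      then have "Inf K = a" "Sup K = b" using K by auto
      then show ?thesis using ab K by simp
    qed
    have el: "Inf K \<le> t \<and> t \<le> Sup K \<and> x \<le> Inf K \<and> Sup K \<le> y \<and> Inf K \<in> K \<and> Sup K \<in> K" if tK: "(t,K) \<in> p" for t K
    proof -
      have e1: "Inf K \<le> t \<and> t \<le> Sup K \<and> x \<le> Inf K \<and> Sup K \<le> y" using elK[OF tK] by blast
      have "Inf K \<in> {Inf K..Sup K}" "Sup K \<in> {Inf K..Sup K}" using e1 by auto
      then have "Inf K \<in> K" "Sup K \<in> K" using elK[OF tK] by (simp_all only:)
      then show ?thesis using e1 by blast
    qed
    have inball: "K \<subseteq> ball t (r t)" if "(t,K) \<in> p" for t K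
      using fine2 that unfolding fine_def by blast
    have tot: "(\<Sum>z\<in>p. g (Sup (snd z)) - g (Inf (snd z))) = g y - g x"
      using additive_tagged_division_1[OF xy p(1), of g] by (simp add: case_prod_unfold)
    have len: "(\<Sum>z\<in>p. Sup (snd z) - Inf (snd z)) = y - x"
      using additive_tagged_division_1[OF xy p(1), of "\<lambda>z. z"] by (simp add: case_prod_unfold)
    define pN where "pN = {z\<in>p. fst z \<in> N \<and> Inf (snd z) < Sup (snd z)}"
    have pNp: "pN \<subseteq> p" unfolding pN_def by auto
    have finN: "finite pN" using fin pNp finite_subset by blast
    have split: "(\<Sum>z\<in>p. g (Sup (snd z)) - g (Inf (snd z))) =
        (\<Sum>z\<in>p - pN. g (Sup (snd z)) - g (Inf (snd z))) + (\<Sum>z\<in>pN. g (Sup (snd z)) - g (Inf (snd z)))"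
      using sum.subset_diff[OF pNp fin] by simp
    have E1: "(\<Sum>z\<in>p - pN. g (Sup (snd z)) - g (Inf (snd z))) \<le> (\<Sum>z\<in>p - pN. e * (Sup (snd z) - Inf (snd z)))"
    proof (rule sum_mono)
      fix z assume z: "z \<in> p - pN"
      obtain t K where zz: "z = (t,K)" by (cases z) blast
      have tK: "(t,K) \<in> p" using z zz by auto
      note el1 = el[OF tK]
      show "g (Sup (snd z)) - g (Inf (snd z)) \<le> e * (Sup (snd z) - Inf (snd z))"
      proof (cases "t \<in> N")
        case True
        then have "Inf K = Sup K" using z zz el1 unfolding pN_def by auto
        then show ?thesis using zz by simp
      next
        case False
        have tin: "t \<in> {x..y}" using el1 by auto
        have SK: "Sup K \<in> S" "Inf K \<in> S" using el1 sub by auto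
        have "Sup K \<in> K" "Inf K \<in> K" using el1 by blast+
        then have "\<bar>Sup K - t\<bar> < r t" "\<bar>Inf K - t\<bar> < r t" using inball[OF tK] by (auto simp: dist_real_def)
        then have "g (Sup K) - g t \<le> e * (Sup K - t)" "g t - g (Inf K) \<le> e * (t - Inf K)"
          using rP[OF tin False SK(1)] rP[OF tin False SK(2)] el1 by auto
        then show ?thesis using zz by (simp add: algebra_simps)
      qed
    qed
    have E2: "(\<Sum>z\<in>p - pN. e * (Sup (snd z) - Inf (snd z))) \<le> e * (y - x)"
    proof -
      have "(\<Sum>z\<in>p - pN. Sup (snd z) - Inf (snd z)) \<le> (\<Sum>z\<in>p. Sup (snd z) - Inf (snd z))"
      proof (rule sum_mono2[OF fin])
        show "p - pN \<subseteq> p" by blast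
        fix z assume "z \<in> p - (p - pN)"
        then have "z \<in> p" by blast
        then show "0 \<le> Sup (snd z) - Inf (snd z)" using el[of "fst z" "snd z"] by simp
      qed
      then show ?thesis using len e by (simp add: sum_distrib_left[symmetric])
    qed
    have L1: "(\<Sum>z\<in>pN. Sup (snd z) - Inf (snd z)) \<le> (\<Sum>(t,K)\<in>p. Henstock_Kurzweil_Integration.content K *\<^sub>R (indicator N t :: real))"
    proof -
      have "(\<Sum>z\<in>pN. Sup (snd z) - Inf (snd z)) = (\<Sum>z\<in>pN. Henstock_Kurzweil_Integration.content (snd z) * indicator N (fst z))"
      proof (rule sum.cong[OF refl])
        fix z assume z: "z \<in> pN"
        then have "z \<in> p" using pNp by auto
        then have le: "Inf (snd z) \<le> Sup (snd z)" using el[of "fst z" "snd z"] by auto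
        have "Henstock_Kurzweil_Integration.content {Inf (snd z)..Sup (snd z)} = Sup (snd z) - Inf (snd z)"
          using le by simp
        then have c: "Henstock_Kurzweil_Integration.content (snd z) = Sup (snd z) - Inf (snd z)"
          using \<open>z \<in> p\<close> by (metis (no_types) prod.collapse elK)
        show "Sup (snd z) - Inf (snd z) = Henstock_Kurzweil_Integration.content (snd z) * indicator N (fst z)"
          using z unfolding pN_def c by (simp add: indicator_def)
      qed
      also have "\<dots> \<le> (\<Sum>z\<in>p. Henstock_Kurzweil_Integration.content (snd z) * indicator N (fst z))"
        by (rule sum_mono2[OF fin pNp]) auto
      finally show ?thesis by (simp add: case_prod_unfold)
    qed
    have L2: "(\<Sum>z\<in>pN. Sup (snd z) - Inf (snd z)) < \<delta>"
    proof -
      have "(\<Sum>(t,K)\<in>p. Henstock_Kurzweil_Integration.content K *\<^sub>R (indicator N t :: real)) \<le>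
        norm ((\<Sum>(t,K)\<in>p. Henstock_Kurzweil_Integration.content K *\<^sub>R (indicator N t :: real)) - 0)" by simp
      then show ?thesis using L1 \<gamma>1d[OF p(1) fine1] by linarith
    qed
    obtain hh where hh: "bij_betw hh {0..<card pN} pN" using ex_bij_betw_nat_finite[OF finN] by blast
    define n where "n = card pN"
    define A where "A i = Inf (snd (hh i))" for i
    define B where "B i = Sup (snd (hh i))" for i
    have hin: "hh i \<in> pN" if "i < n" for i using hh that unfolding n_def bij_betw_def by auto
    have reidx: "(\<Sum>i<n. F (hh i)) = (\<Sum>z\<in>pN. F z)" for F :: "real \<times> real set \<Rightarrow> real"
      using sum.reindex_bij_betw[OF hh, of F] unfolding n_def by (simp add: lessThan_atLeast0)
    have c1: "\<forall>i<n. A i \<le> B i \<and> A i \<in> S \<and> B i \<in> S"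
    proof (intro allI impI)
      fix i assume "i < n"
      then have "hh i \<in> p" using hin pNp by auto
      then show "A i \<le> B i \<and> A i \<in> S \<and> B i \<in> S"
        using el[of "fst (hh i)" "snd (hh i)"] sub unfolding A_def B_def by auto
    qed
    have c2: "\<forall>i<n. \<forall>j<n. i \<noteq> j \<longrightarrow> B i \<le> A j \<or> B j \<le> A i"
    proof (intro allI impI)
      fix i j assume ij: "i < n" "j < n" "i \<noteq> j"
      then have ne: "hh i \<noteq> hh j" using hh unfolding bij_betw_def inj_on_def n_def by auto
      have pi: "hh i \<in> pN" "hh j \<in> pN" using hin ij by auto
      then have pp: "(fst (hh i), snd (hh i)) \<in> p" "(fst (hh j), snd (hh j)) \<in> p" using pNp by auto
      have "interior (snd (hh i)) \<inter> interior (snd (hh j)) = {}"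
        using tagged_division_ofD(5)[OF p(1) pp] ne by (metis prod.collapse)
      moreover have "snd (hh i) = {A i..B i}" "snd (hh j) = {A j..B j}"
        unfolding A_def B_def using elK[OF pp(1)] elK[OF pp(2)] by blast+
      moreover have "A i < B i" "A j < B j" using pi unfolding pN_def A_def B_def by auto
      ultimately show "B i \<le> A j \<or> B j \<le> A i" using nonoverlap_real[of "A i" "B i" "A j" "B j"] by simp
    qed
    have c3: "(\<Sum>i<n. B i - A i) < \<delta>"
      using L2 reidx[of "\<lambda>z. Sup (snd z) - Inf (snd z)"] unfolding A_def B_def by simp
    have "(\<Sum>i<n. \<bar>g (B i) - g (A i)\<bar>) < e" using ac\<delta>[OF c1 c2 c3] .
    then have "(\<Sum>z\<in>pN. \<bar>g (Sup (snd z)) - g (Inf (snd z))\<bar>) < e"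
      using reidx[of "\<lambda>z. \<bar>g (Sup (snd z)) - g (Inf (snd z))\<bar>"] unfolding A_def B_def by simp
    moreover have "(\<Sum>z\<in>pN. g (Sup (snd z)) - g (Inf (snd z))) \<le> (\<Sum>z\<in>pN. \<bar>g (Sup (snd z)) - g (Inf (snd z))\<bar>)"
      by (rule sum_mono) auto
    ultimately show ?thesis using tot split E1 E2 by linarith
  qed
  show ?thesis
  proof (rule ccontr)
    assume "\<not> g y \<le> g x"
    define e where "e = (g y - g x) / (2 * (y - x + 1))"
    have "e > 0" using \<open>\<not> g y \<le> g x\<close> xy unfolding e_def by auto
    have c: "y - x + 1 \<noteq> 0" using xy by linarith
    have "e * (y - x + 1) = (g y - g x) / 2" using c unfolding e_def by (simp add: field_simps)
    then have "e * (y - x) + e = (g y - g x) / 2" by (simp add: algebra_simps)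
    then have "g y - g x \<le> (g y - g x) / 2" using key[OF \<open>e > 0\<close>] by simp
    then show False using \<open>\<not> g y \<le> g x\<close> by (simp add: field_simps)
  qed
qed



lemma ac_combo:
  assumes A1: "abs_continuous_on S g1" and A2: "abs_continuous_on S g2"
  shows "abs_continuous_on S (\<lambda>t. g1 t - g2 t + c * t)"
  unfolding abs_continuous_on_def
proof (intro allI impI)
  fix e :: real assume e: "e > 0"
  have e3: "e/3 > 0" using e by simp
  obtain d1 where d1: "d1 > 0" and H1: "\<forall>(n::nat) (a::nat \<Rightarrow> real) (b::nat \<Rightarrow> real).
        (\<forall>i<n. a i \<le> b i \<and> a i \<in> S \<and> b i \<in> S) \<and>
        (\<forall>i<n. \<forall>j<n. i \<noteq> j \<longrightarrow> b i \<le> a j \<or> b j \<le> a i) \<and>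
        (\<Sum>i<n. b i - a i) < d1
        \<longrightarrow> (\<Sum>i<n. \<bar>g1 (b i) - g1 (a i)\<bar>) < e/3"
    using A1 e3 unfolding abs_continuous_on_def by blast
  obtain d2 where d2: "d2 > 0" and H2: "\<forall>(n::nat) (a::nat \<Rightarrow> real) (b::nat \<Rightarrow> real).
        (\<forall>i<n. a i \<le> b i \<and> a i \<in> S \<and> b i \<in> S) \<and>
        (\<forall>i<n. \<forall>j<n. i \<noteq> j \<longrightarrow> b i \<le> a j \<or> b j \<le> a i) \<and>
        (\<Sum>i<n. b i - a i) < d2
        \<longrightarrow> (\<Sum>i<n. \<bar>g2 (b i) - g2 (a i)\<bar>) < e/3"
    using A2 e3 unfolding abs_continuous_on_def by blast
  define d3 where "d3 = e / (3 * (\<bar>c\<bar> + 1))"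
  have d3: "d3 > 0" unfolding d3_def using e by (simp add: add_pos_nonneg)
  have d3c: "\<bar>c\<bar> * d3 \<le> e/3"
  proof -
    have "\<bar>c\<bar> * d3 \<le> (\<bar>c\<bar> + 1) * d3" using d3 by (simp add: mult_right_mono)
    also have "\<dots> = e/3" unfolding d3_def by (simp add: field_simps add_pos_nonneg)
    finally show ?thesis .
  qed
  define d where "d = min d1 (min d2 d3)"
  show "\<exists>d>0. \<forall>(n::nat) (a::nat \<Rightarrow> real) (b::nat \<Rightarrow> real).
        (\<forall>i<n. a i \<le> b i \<and> a i \<in> S \<and> b i \<in> S) \<and>
        (\<forall>i<n. \<forall>j<n. i \<noteq> j \<longrightarrow> b i \<le> a j \<or> b j \<le> a i) \<and>
        (\<Sum>i<n. b i - a i) < d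
        \<longrightarrow> (\<Sum>i<n. \<bar>(g1 (b i) - g2 (b i) + c * b i) - (g1 (a i) - g2 (a i) + c * a i)\<bar>) < e"
  proof (intro exI[of _ d] conjI allI impI)
    show "d > 0" unfolding d_def using d1 d2 d3 by simp
    fix n :: nat and a b :: "nat \<Rightarrow> real"
    assume H: "(\<forall>i<n. a i \<le> b i \<and> a i \<in> S \<and> b i \<in> S) \<and>
        (\<forall>i<n. \<forall>j<n. i \<noteq> j \<longrightarrow> b i \<le> a j \<or> b j \<le> a i) \<and>
        (\<Sum>i<n. b i - a i) < d"
    have "(\<Sum>i<n. b i - a i) < d1" "(\<Sum>i<n. b i - a i) < d2" "(\<Sum>i<n. b i - a i) < d3"
      using H unfolding d_def by auto
    then have s1: "(\<Sum>i<n. \<bar>g1 (b i) - g1 (a i)\<bar>) < e/3" and s2: "(\<Sum>i<n. \<bar>g2 (b i) - g2 (a i)\<bar>) < e/3"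
      using H H1 H2 by blast+
    have nn: "(\<Sum>i<n. b i - a i) \<ge> 0" using H by (intro sum_nonneg) auto
    have s3: "\<bar>c\<bar> * (\<Sum>i<n. b i - a i) \<le> e/3"
    proof -
      have "\<bar>c\<bar> * (\<Sum>i<n. b i - a i) \<le> \<bar>c\<bar> * d3"
        using \<open>(\<Sum>i<n. b i - a i) < d3\<close> by (intro mult_left_mono) auto
      then show ?thesis using d3c by linarith
    qed
    have "(\<Sum>i<n. \<bar>(g1 (b i) - g2 (b i) + c * b i) - (g1 (a i) - g2 (a i) + c * a i)\<bar>) \<le>
          (\<Sum>i<n. \<bar>g1 (b i) - g1 (a i)\<bar> + \<bar>g2 (b i) - g2 (a i)\<bar> + \<bar>c\<bar> * (b i - a i))"
    proof (rule sum_mono)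
      fix i assume "i \<in> {..<n}"
      then have ab: "a i \<le> b i" using H by auto
      have e1: "(g1 (b i) - g2 (b i) + c * b i) - (g1 (a i) - g2 (a i) + c * a i) =
          (g1 (b i) - g1 (a i)) - (g2 (b i) - g2 (a i)) + c * (b i - a i)" by (simp add: algebra_simps)
      have e2: "\<bar>c * (b i - a i)\<bar> = \<bar>c\<bar> * (b i - a i)" using ab by (simp add: abs_mult)
      show "\<bar>(g1 (b i) - g2 (b i) + c * b i) - (g1 (a i) - g2 (a i) + c * a i)\<bar> \<le>
          \<bar>g1 (b i) - g1 (a i)\<bar> + \<bar>g2 (b i) - g2 (a i)\<bar> + \<bar>c\<bar> * (b i - a i)"
        unfolding e1 e2[symmetric] by linarith
    qed
    also have "\<dots> = (\<Sum>i<n. \<bar>g1 (b i) - g1 (a i)\<bar>) + (\<Sum>i<n. \<bar>g2 (b i) - g2 (a i)\<bar>) + \<bar>c\<bar> * (\<Sum>i<n. b i - a i)"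
      by (simp add: sum.distrib sum_distrib_left)
    finally show "(\<Sum>i<n. \<bar>(g1 (b i) - g2 (b i) + c * b i) - (g1 (a i) - g2 (a i) + c * a i)\<bar>) < e"
      using s1 s2 s3 by linarith
  qed
qed

lemma deriv_min_right:
  fixes w :: "real \<Rightarrow> real"
  assumes W: "(w has_real_derivative D) (at t within {0..T})" and t: "0 \<le> t" "t < T"
    and m: "\<forall>s\<in>{0..T}. w t \<le> w s"
  shows "D \<ge> 0"
proof (rule ccontr)
  assume "\<not> D \<ge> 0"
  then have pos: "-D/2 > 0" by simp
  have "(w has_derivative (\<lambda>h. D*h)) (at t within {0..T})" using W by (simp add: has_field_derivative_def)
  then have "\<exists>r>0. \<forall>s\<in>{0..T}. norm (s - t) < r \<longrightarrow> norm (w s - w t - D*(s-t)) \<le> (-D/2) * norm (s - t)"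
    using pos unfolding has_derivative_within_alt by blast
  then obtain r where r: "r > 0" and rr: "\<forall>s\<in>{0..T}. norm (s - t) < r \<longrightarrow> norm (w s - w t - D*(s-t)) \<le> (-D/2) * norm (s - t)"
    by blast
  define mm where "mm = min r (T - t)"
  define s where "s = t + mm / 2"
  have m1: "mm \<le> r" "mm \<le> T - t" "mm > 0" using r t unfolding mm_def by auto
  have h2: "mm/2 < mm" "mm/2 > 0" using m1 by simp_all
  have q1: "s - t > 0" "s \<le> T" "s - t < r" unfolding s_def using m1 h2 by simp_all
  note q = q1
  have s: "s \<in> {0..T}" "norm (s - t) < r" "s - t > 0" using q t r by auto
  have "norm (w s - w t - D*(s-t)) \<le> (-D/2) * norm (s - t)" using rr s(1,2) by blast
  then have b: "\<bar>w s - w t - D*(s-t)\<bar> \<le> (-D/2) * \<bar>s - t\<bar>" unfolding real_norm_def .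
  have "(-D/2) * \<bar>s - t\<bar> = - (D * (s - t)) / 2" using s(3) by (simp add: abs_if field_simps)
  moreover have "D * (s - t) < 0" using \<open>\<not> D \<ge> 0\<close> s(3) by (simp add: mult_neg_pos)
  ultimately have "w s < w t" using b by linarith
  moreover have "w t \<le> w s" using m s(1) by blast
  ultimately show False by linarith
qed

lemma deriv_min_left:
  fixes w :: "real \<Rightarrow> real"
  assumes W: "(w has_real_derivative D) (at t within {0..T})" and t: "0 < t" "t \<le> T"
    and m: "\<forall>s\<in>{0..T}. w t \<le> w s"
  shows "D \<le> 0"
proof (rule ccontr)
  assume "\<not> D \<le> 0"
  then have pos: "D/2 > 0" by simp
  have "(w has_derivative (\<lambda>h. D*h)) (at t within {0..T})" using W by (simp add: has_field_derivative_def)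
  then have "\<exists>r>0. \<forall>s\<in>{0..T}. norm (s - t) < r \<longrightarrow> norm (w s - w t - D*(s-t)) \<le> (D/2) * norm (s - t)"
    using pos unfolding has_derivative_within_alt by blast
  then obtain r where r: "r > 0" and rr: "\<forall>s\<in>{0..T}. norm (s - t) < r \<longrightarrow> norm (w s - w t - D*(s-t)) \<le> (D/2) * norm (s - t)"
    by blast
  define s where "s = t - min r t / 2"
  have m1: "min r t \<le> r" "min r t \<le> t" "min r t > 0" using r t by auto
  have q: "s - t < 0" "t - s \<le> t/2" "t - s \<le> r/2" unfolding s_def using m1 by linarith+
  have s: "s \<in> {0..T}" "norm (s - t) < r" "s - t < 0" using q t r by auto
  have "norm (w s - w t - D*(s-t)) \<le> (D/2) * norm (s - t)" using rr s(1,2) by blast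
  then have b: "\<bar>w s - w t - D*(s-t)\<bar> \<le> (D/2) * \<bar>s - t\<bar>" unfolding real_norm_def .
  have "(D/2) * \<bar>s - t\<bar> = - (D * (s - t)) / 2" using s(3) by (simp add: abs_if field_simps)
  moreover have "D * (s - t) < 0" using \<open>\<not> D \<le> 0\<close> s(3) by (simp add: mult_pos_neg)
  ultimately have "w s < w t" using b by linarith
  moreover have "w t \<le> w s" using m s(1) by blast
  ultimately show False by linarith
qed



theorem lemma2p1:
  fixes T a :: real and \<phi> f \<alpha> \<alpha>' :: "real \<Rightarrow> real" and h :: "real \<Rightarrow> real \<Rightarrow> real"
  assumes "T > 0"
    and "strict_mono \<phi>" and "\<exists>\<psi>. homeomorphism UNIV UNIV \<phi> \<psi>" and "\<phi> 0 = 0"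
    and "continuous_on UNIV f"
    and "caratheodory T h" and "cond_A0 T h"
    and "a > 0"
    and "in_D T \<phi> \<alpha> \<alpha>'"
    and "AE t in lebesgue. t \<in> {0..T} \<longrightarrow> op_rel T \<phi> f h \<alpha> \<alpha>' (\<lambda>x. x \<ge> a) t"
  shows "strict_lower_solution T \<phi> f h \<alpha>"
proof -
  note Tpos = assms(1)
  have a4: "a/4 > 0" using assms(8) by simp
  have \<alpha>D: "C1_T T \<alpha> \<alpha>'" and \<alpha>ac: "abs_continuous_on {0..T} (\<lambda>t. \<phi> (\<alpha>' t))"
    using assms(9) unfolding in_D_def by auto
  have \<alpha>der: "\<And>t. t \<in> {0..T} \<Longrightarrow> (\<alpha> has_real_derivative \<alpha>' t) (at t within {0..T})"
    and \<alpha>'c: "continuous_on {0..T} \<alpha>'" and \<alpha>per: "\<alpha> 0 = \<alpha> T" "\<alpha>' 0 = \<alpha>' T"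
    using \<alpha>D unfolding C1_T_def by auto
  have part1: "AE t in lebesgue. t \<in> {0..T} \<longrightarrow> op_rel T \<phi> f h \<alpha> \<alpha>' (\<lambda>x. x > 0) t"
  proof (rule AE_mp[OF assms(10)], rule AE_I2, intro impI)
    fix t assume H: "t \<in> {0..T} \<longrightarrow> op_rel T \<phi> f h \<alpha> \<alpha>' (\<lambda>x. a \<le> x) t" and t: "t \<in> {0..T}"
    then show "op_rel T \<phi> f h \<alpha> \<alpha>' (\<lambda>x. 0 < x) t" using assms(8) unfolding op_rel_def by force
  qed
  have part2: "\<forall>u. periodic_solution T \<phi> f h u \<and> (\<forall>t\<in>{0..T}. u t \<ge> \<alpha> t) \<longrightarrow> (\<forall>t\<in>{0..T}. u t > \<alpha> t)"
  proof (intro allI impI)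
    fix u assume "periodic_solution T \<phi> f h u \<and> (\<forall>t\<in>{0..T}. \<alpha> t \<le> u t)"
    then have ps: "periodic_solution T \<phi> f h u" and ge: "\<forall>t\<in>{0..T}. \<alpha> t \<le> u t" by auto
    from ps obtain v where uD: "in_D T \<phi> u v"
      and ueq: "AE t in lebesgue. t \<in> {0..T} \<longrightarrow> op_rel T \<phi> f h u v (\<lambda>x. x = 0) t"
      unfolding periodic_solution_def by blast
    have uC: "C1_T T u v" and uac: "abs_continuous_on {0..T} (\<lambda>t. \<phi> (v t))"
      using uD unfolding in_D_def by auto
    have uder: "\<And>t. t \<in> {0..T} \<Longrightarrow> (u has_real_derivative v t) (at t within {0..T})"
      and vc: "continuous_on {0..T} v" and uper: "u 0 = u T" "v 0 = v T"
      using uC unfolding C1_T_def by auto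
    show "\<forall>t\<in>{0..T}. \<alpha> t < u t"
    proof (rule ccontr)
      assume "\<not> (\<forall>t\<in>{0..T}. \<alpha> t < u t)"
      then obtain t1 where t1: "t1 \<in> {0..T}" "u t1 \<le> \<alpha> t1" by auto
      have eq1: "u t1 = \<alpha> t1" using t1 ge by force
      define t0 where "t0 = (if t1 = 0 then T else t1)"
      have t0: "t0 \<in> {0..T}" "0 < t0" "u t0 = \<alpha> t0"
        using t1 eq1 uper \<alpha>per Tpos unfolding t0_def by auto
      define w where "w = (\<lambda>t. u t - \<alpha> t)"
      have wder: "\<And>t. t \<in> {0..T} \<Longrightarrow> (w has_real_derivative (v t - \<alpha>' t)) (at t within {0..T})"
        unfolding w_def by (intro DERIV_diff uder \<alpha>der)
      have wc: "continuous_on {0..T} w" by (rule DERIV_continuous_on[OF wder])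
      have w0: "w t0 = 0" unfolding w_def using t0 by simp
      have wge: "\<forall>s\<in>{0..T}. 0 \<le> w s" unfolding w_def using ge by auto
      have wmin: "\<forall>s\<in>{0..T}. w t0 \<le> w s" using w0 wge by simp
      have le: "v t0 - \<alpha>' t0 \<le> 0"
        by (rule deriv_min_left[OF wder[OF t0(1)] t0(2) _ wmin]) (use t0 in auto)
      have ge0: "v t0 - \<alpha>' t0 \<ge> 0"
      proof (cases "t0 < T")
        case True
        show ?thesis by (rule deriv_min_right[OF wder[OF t0(1)] _ True wmin]) (use t0 in auto)
      next
        case False
        then have tT: "t0 = T" using t0 by auto
        have "w 0 = 0" using w0 tT uper \<alpha>per unfolding w_def by simp
        then have wmin0: "\<forall>s\<in>{0..T}. w 0 \<le> w s" using wge by simp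
        have "v 0 - \<alpha>' 0 \<ge> 0" by (rule deriv_min_right[OF wder[of 0] _ Tpos wmin0]) (use Tpos in auto)
        then show ?thesis using uper \<alpha>per tT by simp
      qed
      have veq: "v t0 = \<alpha>' t0" using le ge0 by simp
      have uc: "continuous_on {0..T} u" by (rule DERIV_continuous_on[OF uder])
      have \<alpha>c: "continuous_on {0..T} \<alpha>" by (rule DERIV_continuous_on[OF \<alpha>der])
      have fu: "continuous_on {0..T} (\<lambda>t. f (u t))" using continuous_on_compose2[OF assms(5) uc] by simp
      have f\<alpha>: "continuous_on {0..T} (\<lambda>t. f (\<alpha> t))" using continuous_on_compose2[OF assms(5) \<alpha>c] by simp
      define k where "k = (\<lambda>t. f (u t) * v t - f (\<alpha> t) * \<alpha>' t)"
      have kc: "continuous_on {0..T} k" unfolding k_def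
        by (intro continuous_on_diff continuous_on_mult fu f\<alpha> vc \<alpha>'c)
      have k0: "k t0 = 0" unfolding k_def using veq t0(3) by simp
      have "\<exists>r>0. \<forall>t\<in>{0..T}. dist t t0 < r \<longrightarrow> dist (k t) (k t0) < a/4"
        using kc t0(1) a4 unfolding continuous_on_iff by blast
      then obtain r1 where r1: "r1 > 0" "\<forall>t\<in>{0..T}. dist t t0 < r1 \<longrightarrow> dist (k t) (k t0) < a/4" by blast
      have "\<exists>d>0. AE t in lebesgue. (t \<in> {0..T} \<and> \<bar>t - t0\<bar> < d) \<longrightarrow>
          (\<forall>z. \<bar>z - \<alpha> t0\<bar> < d \<longrightarrow> \<bar>h t z - h t (\<alpha> t0)\<bar> < a/4)"
        using assms(7) t0(1) a4 unfolding cond_A0_def by blast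
      then obtain d where d: "d > 0" and A0: "AE t in lebesgue. (t \<in> {0..T} \<and> \<bar>t - t0\<bar> < d) \<longrightarrow>
          (\<forall>z. \<bar>z - \<alpha> t0\<bar> < d \<longrightarrow> \<bar>h t z - h t (\<alpha> t0)\<bar> < a/4)" by blast
      have "\<exists>r>0. \<forall>t\<in>{0..T}. dist t t0 < r \<longrightarrow> dist (u t) (u t0) < d"
        using uc t0(1) d unfolding continuous_on_iff by blast
      then obtain r2 where r2: "r2 > 0" "\<forall>t\<in>{0..T}. dist t t0 < r2 \<longrightarrow> dist (u t) (u t0) < d" by blast
      have "\<exists>r>0. \<forall>t\<in>{0..T}. dist t t0 < r \<longrightarrow> dist (\<alpha> t) (\<alpha> t0) < d"
        using \<alpha>c t0(1) d unfolding continuous_on_iff by blast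
      then obtain r3 where r3: "r3 > 0" "\<forall>t\<in>{0..T}. dist t t0 < r3 \<longrightarrow> dist (\<alpha> t) (\<alpha> t0) < d" by blast
      define \<rho> where "\<rho> = min (min r1 d) (min r2 r3)"
      have \<rho>: "\<rho> > 0" "\<rho> \<le> r1" "\<rho> \<le> d" "\<rho> \<le> r2" "\<rho> \<le> r3" unfolding \<rho>_def using r1 r2 r3 d by auto
      define G where "G = (\<lambda>s. \<phi> (v s) - \<phi> (\<alpha>' s) + a/4 * s)"
      have GAE: "AE t in lebesgue. (t \<in> {0..T} \<and> \<bar>t - t0\<bar> < \<rho>) \<longrightarrow>
          (\<exists>D. (G has_real_derivative D) (at t within {0..T}) \<and> D \<le> 0)"
        using ueq assms(10) A0
      proof eventually_elim
        case (elim t)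
        show ?case
        proof
          assume tt: "t \<in> {0..T} \<and> \<bar>t - t0\<bar> < \<rho>"
          obtain d1 where d1: "((\<lambda>s. \<phi> (v s)) has_real_derivative d1) (at t within {0..T})"
              "d1 + f (u t) * v t + h t (u t) = 0"
            using elim(1) tt unfolding op_rel_def by blast
          obtain d2 where d2: "((\<lambda>s. \<phi> (\<alpha>' s)) has_real_derivative d2) (at t within {0..T})"
              "a \<le> d2 + f (\<alpha> t) * \<alpha>' t + h t (\<alpha> t)"
            using elim(2) tt unfolding op_rel_def by blast
          have tin: "t \<in> {0..T}" and dt: "dist t t0 < r1" "dist t t0 < r2" "dist t t0 < r3" "\<bar>t - t0\<bar> < d"
            using tt \<rho> by (auto simp: dist_real_def)
          have hk: "\<bar>k t\<bar> < a/4" using r1(2) tin dt(1) k0 by (auto simp: dist_real_def)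
          have hu: "\<bar>u t - \<alpha> t0\<bar> < d" using r2(2) tin dt(2) t0(3) by (auto simp: dist_real_def)
          have ha: "\<bar>\<alpha> t - \<alpha> t0\<bar> < d" using r3(2) tin dt(3) by (auto simp: dist_real_def)
          have hA: "\<forall>z. \<bar>z - \<alpha> t0\<bar> < d \<longrightarrow> \<bar>h t z - h t (\<alpha> t0)\<bar> < a/4" using elim(3) tin dt(4) by blast
          have h1: "\<bar>h t (u t) - h t (\<alpha> t0)\<bar> < a/4" using hA hu by blast
          have h2: "\<bar>h t (\<alpha> t) - h t (\<alpha> t0)\<bar> < a/4" using hA ha by blast
          have D: "(G has_real_derivative (d1 - d2 + a/4 * 1)) (at t within {0..T})"
            unfolding G_def by (intro DERIV_add DERIV_diff DERIV_cmult DERIV_ident d1(1) d2(1))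
          have kk: "k t = f (u t) * v t - f (\<alpha> t) * \<alpha>' t" unfolding k_def by simp
          have "d1 - d2 + a/4 * 1 \<le> 0"
            using d1(2) d2(2) hk h1 h2 kk unfolding abs_less_iff by linarith
          then show "\<exists>D. (G has_real_derivative D) (at t within {0..T}) \<and> D \<le> 0" using D by blast
        qed
      qed
      from GAE obtain N where N: "{x \<in> space lebesgue. \<not> ((x \<in> {0..T} \<and> \<bar>x - t0\<bar> < \<rho>) \<longrightarrow>
          (\<exists>D. (G has_real_derivative D) (at x within {0..T}) \<and> D \<le> 0))} \<subseteq> N"
          "emeasure lebesgue N = 0" "N \<in> sets lebesgue"
        by (rule AE_E)
      have negN: "negligible N" using N(2,3) by (simp add: negligible_iff_null_sets null_sets_def)
      have PN: "\<exists>D. (G has_real_derivative D) (at t within {0..T}) \<and> D \<le> 0"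
        if "t \<in> {0..T}" "\<bar>t - t0\<bar> < \<rho>" "t \<notin> N" for t
        using N(1) that by auto
      have Gac: "abs_continuous_on {0..T} G" unfolding G_def by (rule ac_combo[OF uac \<alpha>ac])
      define s0 where "s0 = max (t0/2) (t0 - \<rho>/2)"
      have s0: "0 < s0" "s0 < t0" "t0 - s0 < \<rho>" unfolding s0_def using t0 \<rho> by auto
      have vpos: "\<alpha>' s < v s" if s: "s0 \<le> s" "s < t0" for s
      proof -
        have "G t0 \<le> G s"
        proof (rule ac_nonincr[OF _ _ Gac negN])
          show "s \<le> t0" using s by simp
          show "{s..t0} \<subseteq> {0..T}" using s s0 t0 by auto
          fix t assume "t \<in> {s..t0}" "t \<notin> N"
          then show "\<exists>D. (G has_real_derivative D) (at t within {0..T}) \<and> D \<le> 0"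
            using PN[of t] s s0 t0 by auto
        qed
        then have g: "\<phi> (v t0) - \<phi> (\<alpha>' t0) + a/4 * t0 \<le> \<phi> (v s) - \<phi> (\<alpha>' s) + a/4 * s" unfolding G_def .
        have e: "a/4 * (t0 - s) = a/4 * t0 - a/4 * s" by (simp add: right_diff_distrib)
        have pv: "\<phi> (v t0) = \<phi> (\<alpha>' t0)" using veq by simp
        have "\<phi> (v s) - \<phi> (\<alpha>' s) \<ge> a/4 * (t0 - s)" using g e pv by linarith
        moreover have "a/4 * (t0 - s) > 0" using assms(8) s by simp
        ultimately have "\<phi> (\<alpha>' s) < \<phi> (v s)" by linarith
        then show ?thesis using assms(2) by (simp add: strict_mono_less)
      qed
      have "w s0 < w t0"
      proof (rule DERIV_pos_imp_increasing_open[OF s0(2)])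
        fix x assume x: "s0 < x" "x < t0"
        then have xi: "x \<in> interior {0..T}" using s0 t0 by auto
        have "(w has_real_derivative (v x - \<alpha>' x)) (at x)"
          using wder[of x] xi at_within_interior[OF xi] by auto
        moreover have "v x - \<alpha>' x > 0" using vpos[of x] x by auto
        ultimately show "\<exists>y. DERIV w x :> y \<and> y > 0" by blast
      next
        show "continuous_on {s0..t0} w" by (rule continuous_on_subset[OF wc]) (use s0 t0 in auto)
      qed
      moreover have "w s0 \<ge> 0" using wge s0 t0 by auto
      ultimately show False using w0 by linarith
    qed
  qed
  show ?thesis unfolding strict_lower_solution_def using assms(9) part1 part2 by blast
qed

end
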